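(* Let $b:\mathbb R\to\mathbb R$ be a function (bottom topography). Let $\rho,p,u,x,\check B$ be grid functions satisfying the scheme (M) at every node, where either $b$ is constant and $\check B\equiv0$, or $u+\check u\neq0$ at every node and $$\check B=\frac{b(\hat x)-b(\check x)}{\tau\,(u+\check u)}.$$ Then at every node the discrete energy conservation law $$\Big(\frac{u^2}{2}+\frac{p}{2\sqrt p-\rho}+\frac{\alpha^2(2\sqrt p-\rho)}{2p\rho}-\frac{b(\hat x)+b(x)}{2}\Big)_{\check t}+\Big(\frac{u^++\check u^+}{2}\,Q\Big)_{\bar s}=0$$ holds.
   Context: Fix mesh steps $\tau>0$, $h>0$ and a constant $\alpha\in\mathbb R$. A grid function is a real-valued function $f=f(t,s)$ on the uniform orthogonal mesh $\{(n\tau,kh): n,k\in\mathbb Z\}$. Shifts: $\hat f=f(t+\tau,s)$, $\check f=f(t-\tau,s)$, $f^+=f_+=f(t,s+h)$, $f^-=f_-=f(t,s-h)$; a shift applied to a composite expression shifts the whole expression (e.g. $\check u_s$ is $u_s$ at $(t-\tau,s)$, $\check u^+$ is $u$ at $(t-\tau,s+h)$). Differences: $f_t=(\hat f-f)/\tau$, $f_{\check t}=(f-\check f)/\tau$, $f_s=(f_+-f)/h$, $f_{\bar s}=(f-f_-)/h$. Let $\rho>0$, $p>0$, $u$, $x$, $\check B$ be grid functions, and set $$Q=\Big(\frac{4}{\rho\check\rho}-\frac{2}{\sqrt p}\Big(\frac1\rho+\frac1{\check\rho}\Big)+\frac1p\Big)^{-1}-\frac{\alpha^2}{\sqrt p}$$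 (the bracket being assumed nonzero). The scheme (M) (shallow water MHD in mass Lagrangian coordinates) is the requirement that at every node $$\rho_{\check t}+\tfrac12\rho\check\rho\,(u_s+\check u_s)=0,\quad u_{\check t}+Q_{\bar s}-\check B=0,\quad x_t=u,\quad \check x_s+x_s=\frac{1}{\sqrt{\check p}}+\frac1{\sqrt p}=\frac{2}{\check\rho}.$$ *)

theory Defs
  imports Complex_Main
begin

text \<open>Grid functions: f n k is the value at the node (n tau, k h), n,k integers.\<close>
type_synonym grid = "int \<Rightarrow> int \<Rightarrow> real"

definition dt :: "real \<Rightarrow> grid \<Rightarrow> grid" where
  "dt \<tau> f n k = (f (n+1) k - f n k) / \<tau>"
definition dtb :: "real \<Rightarrow> grid \<Rightarrow> grid" where
  "dtb \<tau> f n k = (f n k - f (n-1) k) / \<tau>"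
definition ds :: "real \<Rightarrow> grid \<Rightarrow> grid" where
  "ds h f n k = (f n (k+1) - f n k) / h"
definition dsb :: "real \<Rightarrow> grid \<Rightarrow> grid" where
  "dsb h f n k = (f n k - f n (k-1)) / h"
definition tfwd :: "grid \<Rightarrow> grid" where
  "tfwd f n k = f (n+1) k"
definition tbck :: "grid \<Rightarrow> grid" where
  "tbck f n k = f (n-1) k"
definition sfwd :: "grid \<Rightarrow> grid" where
  "sfwd f n k = f n (k+1)"

definition Qbr :: "grid \<Rightarrow> grid \<Rightarrow> grid" where
  "Qbr \<rho> p n k = 4 / (\<rho> n k * tbck \<rho> n k)
     - 2 / sqrt (p n k) * (1 / \<rho> n k + 1 / tbck \<rho> n k) + 1 / p n k"

definition Qf :: "real \<Rightarrow> grid \<Rightarrow> grid \<Rightarrow> grid" where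
  "Qf \<alpha> \<rho> p n k = inverse (Qbr \<rho> p n k) - \<alpha>\<^sup>2 / sqrt (p n k)"

definition schemeM :: "real \<Rightarrow> real \<Rightarrow> real \<Rightarrow> grid \<Rightarrow> grid \<Rightarrow> grid \<Rightarrow> grid \<Rightarrow> grid \<Rightarrow> bool" where
  "schemeM \<tau> h \<alpha> \<rho> p u x Bc \<longleftrightarrow> (\<forall>n k.
      dtb \<tau> \<rho> n k + 1/2 * \<rho> n k * tbck \<rho> n k * (ds h u n k + tbck (ds h u) n k) = 0
    \<and> dtb \<tau> u n k + dsb h (Qf \<alpha> \<rho> p) n k - Bc n k = 0
    \<and> dt \<tau> x n k = u n k
    \<and> tbck (ds h x) n k + ds h x n k = 1 / sqrt (tbck p n k) + 1 / sqrt (p n k)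
    \<and> 1 / sqrt (tbck p n k) + 1 / sqrt (p n k) = 2 / tbck \<rho> n k)"

definition energy :: "real \<Rightarrow> (real \<Rightarrow> real) \<Rightarrow> grid \<Rightarrow> grid \<Rightarrow> grid \<Rightarrow> grid \<Rightarrow> grid" where
  "energy \<alpha> b \<rho> p u x n k = (u n k)\<^sup>2 / 2 + p n k / (2 * sqrt (p n k) - \<rho> n k)
     + \<alpha>\<^sup>2 * (2 * sqrt (p n k) - \<rho> n k) / (2 * p n k * \<rho> n k)
     - (b (tfwd x n k) + b (x n k)) / 2"

definition eflux :: "real \<Rightarrow> grid \<Rightarrow> grid \<Rightarrow> grid \<Rightarrow> grid" where
  "eflux \<alpha> \<rho> p u n k = (sfwd u n k + sfwd (tbck u) n k) / 2 * Qf \<alpha> \<rho> p n k"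

end

theory Submission
  imports Defs
begin

lemma core:
  fixes s0 s1 s2 u0 u1 u0p u1p Qm a \<tau> h B bh bm bc :: real
  assumes pos: "s0>0" "s1>0" "s2>0" "\<tau>>0" "h>0"
  and c: "(2*s1*s2/(s1+s2) - 2*s0*s1/(s0+s1))/\<tau> + 1/2*(2*s1*s2/(s1+s2))*(2*s0*s1/(s0+s1))*((u1p-u1)/h + (u0p-u0)/h) = 0"
  and m: "(u1-u0)/\<tau> + ((s0*s2 - a\<^sup>2/s1)-Qm)/h - B = 0"
  and bB: "B*(\<tau>*(u1+u0)) = bh - bc"
  shows "((u1\<^sup>2/2 + (s1+s2)/2 + a\<^sup>2/(2*s1*s2) - (bh+bm)/2) - (u0\<^sup>2/2 + (s0+s1)/2 + a\<^sup>2/(2*s0*s1) - (bm+bc)/2))/\<tau>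
     + ((u1p+u0p)/2*(s0*s2 - a\<^sup>2/s1) - (u1+u0)/2*Qm)/h = 0"
proof -
  have D: "u1p+u0p = u1+u0 + h*(1/s2 - 1/s0)/\<tau>"
  proof -
    define r1 where "r1 = 2*s1*s2/(s1+s2)"
    define r0 where "r0 = 2*s0*s1/(s0+s1)"
    have r1p: "r1 > 0" "r0 > 0" using pos by (auto simp: r1_def r0_def)
    have c2: "(r1-r0)/\<tau> + 1/2*r1*r0*((u1p-u1)+(u0p-u0))/h = 0" using c proof -
      have "(u1p-u1)/h + (u0p-u0)/h = ((u1p-u1)+(u0p-u0))/h" by (simp add: add_divide_distrib)
      thus ?thesis using c unfolding r1_def r0_def by simp
    qed
    have X: "(u1p-u1)+(u0p-u0) = 2*h*(1/r1 - 1/r0)/\<tau>"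
      using c2 r1p pos by (simp add: field_simps)
    have "2*(1/r1 - 1/r0) = 1/s2 - 1/s0" using pos unfolding r1_def r0_def by (simp add: field_simps)
    then have "h*(1/s2 - 1/s0)/\<tau> = 2*h*(1/r1 - 1/r0)/\<tau>" by (metis mult.assoc mult.commute)
    with X show ?thesis by linarith
  qed
  have Qm: "Qm = (s0*s2 - a\<^sup>2/s1) + h*((u1-u0)/\<tau> - B)"
    using m pos by (simp add: field_simps)
  have bh: "bh = bc + B*(\<tau>*(u1+u0))" using bB by simp
  show ?thesis unfolding Qm bh D using pos by (simp add: field_simps) (simp add: algebra_simps power2_eq_square)
qed

lemma cancel_div: "c\<noteq>0 \<Longrightarrow> (x/c)/(y/c) = x/(y::real)" by simp

lemma energy_simp:
  fixes r p q u a bb :: real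
  assumes "p>0" "q>0" "1/sqrt p + 1/sqrt q = 2/r"
  shows "u\<^sup>2/2 + p/(2*sqrt p - r) + a\<^sup>2*(2*sqrt p - r)/(2*p*r) - bb
        = u\<^sup>2/2 + (sqrt p + sqrt q)/2 + a\<^sup>2/(2*sqrt p*sqrt q) - bb"
proof -
  define s where "s = sqrt p"
  define t where "t = sqrt q"
  have st: "s>0" "t>0" using assms by (auto simp: s_def t_def)
  have pp: "p = s\<^sup>2" using assms by (simp add: s_def)
  have r: "r = 2*s*t/(s+t)" using assms(3) st unfolding s_def[symmetric] t_def[symmetric]
    by (simp add: field_simps)
  have d: "2*s - r = 2*s^2/(s+t)" unfolding r using st by (simp add: field_simps power2_eq_square)
  have e: "2*s^2*r = 4*s^3*t/(s+t)" unfolding r using st by (simp add: field_simps power2_eq_square power3_eq_cube)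
  have t1: "s^2/(2*s - r) = (s+t)/2" unfolding d using st by (simp add: field_simps power2_eq_square)
  have t2: "a^2*(2*s - r)/(2*s^2*r) = a^2/(2*s*t)"
  proof -
    have "a^2*(2*s - r)/(2*s^2*r) = a^2*(2*s^2/(s+t))/(4*s^3*t/(s+t))" unfolding d e ..
    also have "... = a^2*((2*s^2)/(4*s^3*t))"
    proof -
      have "(2*s^2/(s+t))/(4*s^3*t/(s+t)) = (2*s^2)/(4*s^3*t)" 
      proof -
        have "s+t \<noteq> 0" using st by simp
        thus ?thesis by (rule cancel_div)
      qed
      thus ?thesis by (metis times_divide_eq_right)
    qed
    also have "... = a^2/(2*s*t)" using st by (simp add: field_simps power2_eq_square power3_eq_cube)
    finally show ?thesis .
  qed
  show ?thesis unfolding s_def[symmetric] t_def[symmetric] unfolding pp using t1 t2 by (simp add: add_divide_distrib)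
qed

lemma qbr_simp:
  fixes r0 r1 s0 s1 s2 :: real
  assumes "s0>0" "s1>0" "s2>0" "r1 = 2*s1*s2/(s1+s2)" "r0 = 2*s0*s1/(s0+s1)"
  shows "4/(r1*r0) - 2/s1*(1/r1+1/r0) + 1/s1\<^sup>2 = 1/(s0*s2)"
  unfolding assms(4,5) using assms(1-3) by (simp add: field_simps power2_eq_square)

lemma rho_of:
  fixes r s t :: real
  assumes "s>0" "t>0" "1/s + 1/t = 2/r"
  shows "r = 2*t*s/(t+s)"
  using assms by (simp add: field_simps)

theorem mainTheorem12:
  fixes \<tau> h \<alpha> :: real and b :: "real \<Rightarrow> real" and \<rho> p u x Bc :: grid
  assumes "\<tau> > 0" and "h > 0"
    and "\<forall>n k. \<rho> n k > 0" and "\<forall>n k. p n k > 0"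
    and "\<forall>n k. Qbr \<rho> p n k \<noteq> 0"
    and "schemeM \<tau> h \<alpha> \<rho> p u x Bc"
    and "((\<exists>c. \<forall>y. b y = c) \<and> (\<forall>n k. Bc n k = 0))
       \<or> (\<forall>n k. u n k + tbck u n k \<noteq> 0
              \<and> Bc n k = (b (tfwd x n k) - b (tbck x n k)) / (\<tau> * (u n k + tbck u n k)))"
  shows "\<forall>n k. dtb \<tau> (energy \<alpha> b \<rho> p u x) n k + dsb h (eflux \<alpha> \<rho> p u) n k = 0"
proof (intro allI)
  fix n k
  note S = assms(6)[unfolded schemeM_def]
  have rel: "\<And>m. 1/sqrt (p (m-1) k) + 1/sqrt (p m k) = 2/\<rho> (m-1) k"
    using S by (simp add: tbck_def)
  define s0 where "s0 = sqrt (p (n-1) k)"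
  define s1 where "s1 = sqrt (p n k)"
  define s2 where "s2 = sqrt (p (n+1) k)"
  have sp: "s0>0" "s1>0" "s2>0" using assms(4) by (auto simp: s0_def s1_def s2_def)
  have r0: "\<rho> (n-1) k = 2*s1*s0/(s1+s0)"
    using rho_of[OF sp(1) sp(2) rel[of n, folded s0_def s1_def]] by simp
  have r1: "\<rho> n k = 2*s2*s1/(s2+s1)"
    using rho_of[OF sp(2) sp(3)] rel[of "n+1"] by (simp add: s1_def s2_def)
  have r0': "\<rho> (n-1) k = 2*s0*s1/(s0+s1)" using r0 by (simp add: ac_simps)
  have r1': "\<rho> n k = 2*s1*s2/(s1+s2)" using r1 by (simp add: ac_simps)
  have pn: "p n k = s1\<^sup>2" using assms(4) unfolding s1_def by (metis less_imp_le real_sqrt_pow2)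
  have Q: "Qf \<alpha> \<rho> p n k = s0*s2 - \<alpha>\<^sup>2/s1"
  proof -
    have "Qbr \<rho> p n k = 1/(s0*s2)"
      unfolding Qbr_def tbck_def s1_def[symmetric] unfolding pn
      by (rule qbr_simp[OF sp r1' r0'])
    thus ?thesis unfolding Qf_def s1_def by simp
  qed
  have E1: "energy \<alpha> b \<rho> p u x n k = (u n k)\<^sup>2/2 + (s1+s2)/2 + \<alpha>\<^sup>2/(2*s1*s2) - (b (x (n+1) k) + b (x n k))/2"
    unfolding energy_def tfwd_def s1_def s2_def
    using energy_simp[of "p n k" "p (n+1) k" "\<rho> n k" "u n k" \<alpha> "(b (x (n+1) k) + b (x n k))/2"]
      assms(4) rel[of "n+1"] by simp
  have E0: "energy \<alpha> b \<rho> p u x (n-1) k = (u (n-1) k)\<^sup>2/2 + (s0+s1)/2 + \<alpha>\<^sup>2/(2*s0*s1) - (b (x n k) + b (x (n-1) k))/2"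
    unfolding energy_def tfwd_def s1_def s0_def
    using energy_simp[of "p (n-1) k" "p n k" "\<rho> (n-1) k" "u (n-1) k" \<alpha> "(b (x n k) + b (x (n-1) k))/2"]
      assms(4) rel[of n] by simp
  have c: "dtb \<tau> \<rho> n k + 1/2 * \<rho> n k * tbck \<rho> n k * (ds h u n k + tbck (ds h u) n k) = 0"
   and m: "dtb \<tau> u n k + dsb h (Qf \<alpha> \<rho> p) n k - Bc n k = 0" using S by auto
  have bB: "Bc n k*(\<tau>*(u n k + u (n-1) k)) = b (x (n+1) k) - b (x (n-1) k)"
    using assms(7)
  proof
    assume "(\<exists>c. \<forall>y. b y = c) \<and> (\<forall>n k. Bc n k = 0)" thus ?thesis by auto
  next
    assume "\<forall>n k. u n k + tbck u n k \<noteq> 0 \<and> Bc n k = (b (tfwd x n k) - b (tbck x n k)) / (\<tau> * (u n k + tbck u n k))"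
    hence "u n k + u (n-1) k \<noteq> 0" "Bc n k = (b (x (n+1) k) - b (x (n-1) k)) / (\<tau> * (u n k + u (n-1) k))"
      by (auto simp: tbck_def tfwd_def)
    thus ?thesis using assms(1) by simp
  qed
  show "dtb \<tau> (energy \<alpha> b \<rho> p u x) n k + dsb h (eflux \<alpha> \<rho> p u) n k = 0"
    unfolding dtb_def dsb_def eflux_def sfwd_def tbck_def
    apply (simp only: E1 E0 Q diff_add_cancel)
    apply (rule core[OF sp assms(1) assms(2) _ _ bB])
    using c m unfolding dtb_def ds_def dsb_def tbck_def r0' r1' Q by simp_all
qed

end
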